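(* Let $Q=\sum_{i\in I}E_{i,\sigma(i)}\in N_n$ be a subpermutation and let $A=[a_{ij}]\in QU_n$ be a Belitskii canonical form under $B_n$-similarity. Let $i\in I$ and $j\in[n]$. Then $a_{ij}=0$ (i.e. $(i,j)\notin E_A$) in each of the following situations: (1) $i^+<j$ and $j\in S_h$; (2) $j\notin S_t$ and $i<j^-$. In particular, if $i$ and $j$ lie in the same chain of $G_Q$ and $j\neq i^+$, then $a_{ij}=0$.
   Context: $\mathbb F$ is a field; $[n]=\{1,\dots,n\}$. $B_n$ (resp. $U_n$, $N_n$) is the set of $n\times n$ invertible upper triangular (resp. upper triangular with diagonal entries $1$, strictly upper triangular) matrices over $\mathbb F$; $QU_n=\{QU:U\in U_n\}$; $E_{ij}$ is the matrix unit. A subpermutation is a matrix each of whose rows and columns has at most one nonzero entry, equal to $1$; here $I\subseteq[n]$ and $\sigma:I\to[n]$ is injective with $i<\sigma(i)$. For a matrix $X=[x_{ij}]$, $G_X$ is the directed graph on $[n]$ with arc set $E_X=\{(i,j):x_{ij}\neq0\}$. The connected components of $G_Q$ are directed paths $i_1\to\cdots\to i_p$ with $i_1<\cdots<i_p$, called chains. Notation: $i^+:=\sigma(i)$ for $i\in I$, $j^-:=\sigma^{-1}(j)$ for $j\in\sigma(I)$; $S_h=[n]\setminus I$ (chain heads) and $S_t=[n]\setminus\sigma(I)$ (chain tails). Belitskii order on positions $\{(i,j):1\le i<j\le n\}$: $(i,j)\prec(i',j')$ iff $i>i'$, or $i=i'$ and $j<j'$. Belitskii's algorithm for $B_n$-similarity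 on $N_n$: given $A\in N_n$ put $A^{(0)}=A$, $G^{(0)}=B_n$. For $k=0,1,\dots$, let $(p,q)$ be the $(k+1)$th position in Belitskii order and look at the $(p,q)$ entries of all matrices $G^{(k)}$-similar to $A^{(k)}$: (a) if this entry is always $0$ or can take every value of $\mathbb F$, choose $A^{(k+1)}$ $G^{(k)}$-similar to $A^{(k)}$ with that entry $0$; (b) if it takes exactly the values of $\mathbb F\setminus\{0\}$, choose $A^{(k+1)}$ with that entry $1$; (c) otherwise it is a constant $\lambda\ne0$ and $A^{(k+1)}=A^{(k)}$. $G^{(k+1)}$ is the subgroup of $g\in G^{(k)}$ such that $gA^{(k+1)}g^{-1}$ agrees with $A^{(k+1)}$ in the first $k+1$ positions. The final matrix is the Belitskii canonical form of $A$; a matrix is a Belitskii canonical form if it is the Belitskii canonical form of some matrix. *)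

theory Defs
  imports Main
begin

text \<open>n x n matrices over a field are represented as functions nat => nat => 'a,
  with row/column indices in {1..n} and all entries outside that range equal to 0.\<close>

type_synonym 'a mat = "nat \<Rightarrow> nat \<Rightarrow> 'a"

definition mats :: "nat \<Rightarrow> ('a::zero) mat set" where
  "mats n = {A. \<forall>i j. i \<notin> {1..n} \<or> j \<notin> {1..n} \<longrightarrow> A i j = 0}"

definition mmul :: "nat \<Rightarrow> ('a::comm_semiring_0) mat \<Rightarrow> 'a mat \<Rightarrow> 'a mat" where
  "mmul n A B = (\<lambda>i j. \<Sum>k\<in>{1..n}. A i k * B k j)"

definition idm :: "nat \<Rightarrow> ('a::{zero,one}) mat" where
  "idm n = (\<lambda>i j. if i = j \<and> i \<in> {1..n} then 1 else 0)"

definition matunit :: "nat \<Rightarrow> nat \<Rightarrow> ('a::{zero,one}) mat" where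
  "matunit p q = (\<lambda>i j. if i = p \<and> j = q then 1 else 0)"

definition invertible_mat :: "nat \<Rightarrow> ('a::comm_semiring_1) mat \<Rightarrow> bool" where
  "invertible_mat n g \<longleftrightarrow> g \<in> mats n \<and>
     (\<exists>h\<in>mats n. mmul n g h = idm n \<and> mmul n h g = idm n)"

definition minv :: "nat \<Rightarrow> ('a::comm_semiring_1) mat \<Rightarrow> 'a mat" where
  "minv n g = (THE h. h \<in> mats n \<and> mmul n g h = idm n \<and> mmul n h g = idm n)"

definition upper_tri :: "nat \<Rightarrow> ('a::zero) mat \<Rightarrow> bool" where
  "upper_tri n A \<longleftrightarrow> A \<in> mats n \<and> (\<forall>i j. j < i \<longrightarrow> A i j = 0)"

definition Bn_mats :: "nat \<Rightarrow> ('a::field) mat set" where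
  "Bn_mats n = {g. invertible_mat n g \<and> upper_tri n g}"

definition Un_mats :: "nat \<Rightarrow> ('a::field) mat set" where
  "Un_mats n = {U. upper_tri n U \<and> (\<forall>i\<in>{1..n}. U i i = 1)}"

definition Nn_mats :: "nat \<Rightarrow> ('a::field) mat set" where
  "Nn_mats n = {A. upper_tri n A \<and> (\<forall>i. A i i = 0)}"

definition QUn :: "nat \<Rightarrow> ('a::field) mat \<Rightarrow> 'a mat set" where
  "QUn n Q = {mmul n Q U | U. U \<in> Un_mats n}"

definition subperm :: "nat set \<Rightarrow> (nat \<Rightarrow> nat) \<Rightarrow> ('a::{zero,one}) mat" where
  "subperm I \<sigma> = (\<lambda>i j. if i \<in> I \<and> j = \<sigma> i then 1 else 0)"

definition conj_mat :: "nat \<Rightarrow> ('a::field) mat \<Rightarrow> 'a mat \<Rightarrow> 'a mat" where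
  "conj_mat n g A = mmul n (mmul n g A) (minv n g)"

definition similar_in :: "nat \<Rightarrow> ('a::field) mat set \<Rightarrow> 'a mat \<Rightarrow> 'a mat \<Rightarrow> bool" where
  "similar_in n G A B \<longleftrightarrow> (\<exists>g\<in>G. B = conj_mat n g A)"

definition bel_prec :: "nat \<times> nat \<Rightarrow> nat \<times> nat \<Rightarrow> bool" where
  "bel_prec x y \<longleftrightarrow> fst x > fst y \<or> (fst x = fst y \<and> snd x < snd y)"

definition bel_positions :: "nat \<Rightarrow> (nat \<times> nat) list" where
  "bel_positions n = concat (map (\<lambda>i. map (\<lambda>j. (i, j)) [Suc i..<Suc n]) (rev [1..<n]))"

definition bel_step :: "nat \<Rightarrow> nat \<Rightarrow> ('a::field) mat \<Rightarrow> 'a mat set \<Rightarrow> 'a mat \<Rightarrow> 'a mat set \<Rightarrow> bool" where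
  "bel_step n k A G A' G' \<longleftrightarrow>
    (let p = fst (bel_positions n ! k); q = snd (bel_positions n ! k);
         V = {conj_mat n g A p q | g. g \<in> G} in
     (if V = {0} \<or> V = UNIV then similar_in n G A A' \<and> A' p q = 0
      else if V = UNIV - {0} then similar_in n G A A' \<and> A' p q = 1
      else A' = A)
     \<and> G' = {g \<in> G. \<forall>pos \<in> set (take (Suc k) (bel_positions n)).
                 conj_mat n g A' (fst pos) (snd pos) = A' (fst pos) (snd pos)})"

definition belitskii_cf_of :: "nat \<Rightarrow> ('a::field) mat \<Rightarrow> 'a mat \<Rightarrow> bool" where
  "belitskii_cf_of n A C \<longleftrightarrow> A \<in> Nn_mats n \<and>
    (\<exists>As Gs. As 0 = A \<and> Gs 0 = Bn_mats n \<and>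
      (\<forall>k < length (bel_positions n). bel_step n k (As k) (Gs k) (As (Suc k)) (Gs (Suc k))) \<and>
      C = As (length (bel_positions n)))"

definition is_belitskii_cf :: "nat \<Rightarrow> ('a::field) mat \<Rightarrow> bool" where
  "is_belitskii_cf n C \<longleftrightarrow> (\<exists>A. belitskii_cf_of n A C)"

definition same_chain :: "nat set \<Rightarrow> (nat \<Rightarrow> nat) \<Rightarrow> nat \<Rightarrow> nat \<Rightarrow> bool" where
  "same_chain I \<sigma> i j \<longleftrightarrow>
     (i, j) \<in> ({(k, \<sigma> k) | k. k \<in> I} \<union> {(\<sigma> k, k) | k. k \<in> I})\<^sup>*"

end

theory Submission
  imports Defs
begin
lemma sum_single:
  assumes "finite S" "a \<in> S" "\<And>k. k \<in> S \<Longrightarrow> k \<noteq> a \<Longrightarrow> f k = 0"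
  shows "sum f S = f a"
proof -
  have "sum f S = f a + sum f (S - {a})" using assms by (simp add: sum.remove)
  also have "sum f (S - {a}) = 0" using assms by (intro sum.neutral) auto
  finally show ?thesis by simp
qed


lemma matsD: "A \<in> mats n \<Longrightarrow> i \<notin> {1..n} \<or> j \<notin> {1..n} \<Longrightarrow> A i j = 0"
  unfolding mats_def by auto

lemma mmul_assoc: "mmul n (mmul n A B) C = mmul n A (mmul n B C)"
  unfolding mmul_def
  by (rule ext, rule ext) (simp add: sum_distrib_left sum_distrib_right mult.assoc, rule sum.swap)

lemma mmul_idm_left: "(A::'a::comm_semiring_1 mat) \<in> mats n \<Longrightarrow> mmul n (idm n) A = A"
proof (rule ext, rule ext)
  fix i j assume A: "A \<in> mats n"
  show "mmul n (idm n) A i j = A i j"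
  proof (cases "i \<in> {1..n}")
    case True
    then show ?thesis unfolding mmul_def
      by (subst sum_single[where a=i]) (auto simp: idm_def)
  next
    case False
    then show ?thesis using matsD[OF A] unfolding mmul_def idm_def by auto
  qed
qed

lemma mmul_idm_right: "(A::'a::comm_semiring_1 mat) \<in> mats n \<Longrightarrow> mmul n A (idm n) = A"
proof (rule ext, rule ext)
  fix i j assume A: "A \<in> mats n"
  show "mmul n A (idm n) i j = A i j"
  proof (cases "j \<in> {1..n}")
    case True
    then show ?thesis unfolding mmul_def
      by (subst sum_single[where a=j]) (auto simp: idm_def)
  next
    case False
    then show ?thesis using matsD[OF A] unfolding mmul_def idm_def by auto
  qed
qed

lemma mmul_mats: "A \<in> mats n \<Longrightarrow> B \<in> mats n \<Longrightarrow> mmul n A B \<in> mats n"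
  unfolding mats_def mmul_def by auto

lemma idm_mats: "idm n \<in> mats n"
  unfolding mats_def idm_def by auto

lemma mmul_plus_left: "mmul n (\<lambda>a c. A a c + B a c) C = (\<lambda>a c. mmul n A C a c + mmul n B C a c)"
  unfolding mmul_def by (simp add: distrib_right sum.distrib)
lemma mmul_plus_right: "mmul n C (\<lambda>a c. A a c + B a c) = (\<lambda>a c. mmul n C A a c + mmul n C B a c)"
  unfolding mmul_def by (simp add: distrib_left sum.distrib)
lemma mmul_minus_left: "mmul n (\<lambda>a c. (A a c::'a::comm_ring) - B a c) C = (\<lambda>a c. mmul n A C a c - mmul n B C a c)"
  unfolding mmul_def by (simp add: left_diff_distrib sum_subtractf)
lemma mmul_minus_right: "mmul n C (\<lambda>a c. (A a c::'a::comm_ring) - B a c) = (\<lambda>a c. mmul n C A a c - mmul n C B a c)"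
  unfolding mmul_def by (simp add: right_diff_distrib sum_subtractf)
lemma mmul_scale_left: "mmul n (\<lambda>a c. t * A a c) C = (\<lambda>a c. t * mmul n A C a c)"
  unfolding mmul_def by (simp add: sum_distrib_left mult.assoc)
lemma mmul_scale_right: "mmul n C (\<lambda>a c. t * A a c) = (\<lambda>a c. t * mmul n C A a c)"
  unfolding mmul_def by (simp add: sum_distrib_left mult.left_commute)

lemma inv_unique:
  fixes h :: "'a::comm_semiring_1 mat"
  assumes "h \<in> mats n" "h' \<in> mats n" "mmul n g h = idm n" "mmul n h' g = idm n"
  shows "h' = h"
proof -
  have "h' = mmul n h' (idm n)" using assms by (simp add: mmul_idm_right)
  also have "\<dots> = mmul n (mmul n h' g) h" by (simp only: mmul_assoc assms(3))
  also have "\<dots> = h" using assms by (simp add: mmul_idm_left)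
  finally show ?thesis .
qed

lemma minv_props:
  assumes "invertible_mat n g"
  shows "minv n g \<in> mats n" "mmul n g (minv n g) = idm n" "mmul n (minv n g) g = idm n"
proof -
  obtain h where h: "h \<in> mats n" "mmul n g h = idm n" "mmul n h g = idm n"
    using assms unfolding invertible_mat_def by auto
  have "minv n g = h" unfolding minv_def
    by (rule the_equality) (use h inv_unique in blast)+
  with h show "minv n g \<in> mats n" "mmul n g (minv n g) = idm n" "mmul n (minv n g) g = idm n" by auto
qed

lemma minv_eq:
  assumes "h \<in> mats n" "mmul n g h = idm n" "mmul n h g = idm n"
  shows "minv n g = h"
  unfolding minv_def
  by (rule the_equality) (use assms inv_unique in blast)+

lemma inv_upper:
  fixes g h :: "'a::field mat"
  assumes g: "upper_tri n g" and h: "h \<in> mats n" and hg: "mmul n h g = idm n"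
  shows "\<forall>i. j < i \<longrightarrow> h i j = 0"
proof (induction j rule: less_induct)
  case (less j)
  show ?case
  proof (cases "j \<in> {1..n}")
    case False
    then show ?thesis using matsD[OF h] by auto
  next
    case True
    have gm: "g \<in> mats n" and gl: "\<And>a b. b < a \<Longrightarrow> g a b = 0" using g unfolding upper_tri_def by auto
    have col: "mmul n h g i j = h i j * g j j" if "j \<le> i" for i
      unfolding mmul_def
    proof (rule sum_single[where a=j])
      fix k assume k: "k \<in> {1..n}" "k \<noteq> j"
      show "h i k * g k j = 0"
      proof (cases "k < j")
        case True
        then have "h i k = 0" using less.IH[of k] that by auto
        then show ?thesis by simp
      next
        case False
        then show ?thesis using k gl[of j k] by auto
      qed
    qed (use True in auto)
    have "h j j * g j j = 1" using col[of j] hg True by (simp add: idm_def)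
    then have gjj: "g j j \<noteq> 0" by auto
    show ?thesis
    proof (intro allI impI)
      fix i assume "j < i"
      then have "h i j * g j j = 0" using col[of i] hg by (simp add: idm_def)
      then show "h i j = 0" using gjj by simp
    qed
  qed
qed

lemma Bn_props:
  fixes g :: "'a::field mat"
  assumes "g \<in> Bn_mats n"
  shows "g \<in> mats n" "\<And>a b. b < a \<Longrightarrow> g a b = 0" "minv n g \<in> mats n"
    "\<And>a b. b < a \<Longrightarrow> minv n g a b = 0"
    "mmul n g (minv n g) = idm n" "mmul n (minv n g) g = idm n"
proof -
  have inv: "invertible_mat n g" and ut: "upper_tri n g" using assms unfolding Bn_mats_def by auto
  show "g \<in> mats n" "\<And>a b. b < a \<Longrightarrow> g a b = 0" using ut unfolding upper_tri_def by auto
  show m: "minv n g \<in> mats n" "mmul n g (minv n g) = idm n" "mmul n (minv n g) g = idm n"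
    using minv_props[OF inv] by auto
  show "\<And>a b. b < a \<Longrightarrow> minv n g a b = 0" using inv_upper[OF ut m(1) m(3)] by auto
qed

lemma conj_entry:
  "conj_mat n g B p q = (\<Sum>s\<in>{1..n}. \<Sum>r\<in>{1..n}. g p r * B r s * minv n g s q)"
  unfolding conj_mat_def mmul_def by (simp add: sum_distrib_right)

lemma conj_local:
  fixes g :: "'a::field mat"
  assumes g: "g \<in> Bn_mats n"
    and eq: "\<And>r s. r \<in> {1..n} \<Longrightarrow> s \<in> {1..n} \<Longrightarrow> p \<le> r \<Longrightarrow> s \<le> q \<Longrightarrow> B r s = B' r s"
  shows "conj_mat n g B p q = conj_mat n g B' p q"
  unfolding conj_entry
proof (intro sum.cong refl)
  fix s r assume s: "s \<in> {1..n}" and r: "r \<in> {1..n}"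
  show "g p r * B r s * minv n g s q = g p r * B' r s * minv n g s q"
  proof (cases "p \<le> r \<and> s \<le> q")
    case True then show ?thesis using eq r s by simp
  next
    case False
    then show ?thesis using Bn_props(2,4)[OF g] by (auto simp: not_le)
  qed
qed

lemma Nn_props:
  assumes "B \<in> Nn_mats n"
  shows "B \<in> mats n" "\<And>a b. b \<le> a \<Longrightarrow> B a b = 0"
  using assms unfolding Nn_mats_def upper_tri_def by (auto simp: le_less)

lemma conj_Nn:
  fixes g :: "'a::field mat"
  assumes g: "g \<in> Bn_mats n" and B: "B \<in> Nn_mats n"
  shows "conj_mat n g B \<in> Nn_mats n"
proof -
  have m: "conj_mat n g B \<in> mats n"
    unfolding conj_mat_def using Bn_props[OF g] Nn_props[OF B] by (intro mmul_mats) auto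
  have z: "conj_mat n g B p q = 0" if "q \<le> p" for p q
    unfolding conj_entry
  proof (rule sum.neutral, rule ballI)
    fix s assume s: "s \<in> {1..n}"
    show "(\<Sum>r\<in>{1..n}. g p r * B r s * minv n g s q) = 0"
    proof (rule sum.neutral, rule ballI)
      fix r assume r: "r \<in> {1..n}"
      show "g p r * B r s * minv n g s q = 0"
      proof (cases "r < p")
        case True then show ?thesis using Bn_props(2)[OF g] by simp
      next
        case False
        show ?thesis
        proof (cases "q < s")
          case True then show ?thesis using Bn_props(4)[OF g] by simp
        next
          case False2: False
          then have "s \<le> r" using False that by simp
          then show ?thesis using Nn_props(2)[OF B] by simp
        qed
      qed
    qed
  qed
  show ?thesis unfolding Nn_mats_def upper_tri_def using m z by auto
qed

lemma elem_conj:
  fixes X :: "'a::field mat" and t :: 'a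
  assumes X: "X \<in> mats n" and XX: "mmul n X X = (\<lambda>_ _. 0)" and Xu: "\<forall>a c. c \<le> a \<longrightarrow> X a c = 0"
  defines "g \<equiv> (\<lambda>a c. idm n a c + t * X a c)"
  shows "g \<in> Bn_mats n"
    "\<And>B. B \<in> mats n \<Longrightarrow> conj_mat n g B = (\<lambda>p q. B p q + t * mmul n X B p q - t * mmul n B X p q
        - t * t * mmul n (mmul n X B) X p q)"
proof -
  define h where "h = (\<lambda>a c. idm n a c - t * X a c)"
  have gm: "g \<in> mats n" "h \<in> mats n" using X unfolding g_def h_def mats_def idm_def by auto
  have gh: "mmul n g h = idm n" unfolding g_def h_def
    by (simp add: mmul_plus_left mmul_minus_right mmul_scale_left mmul_scale_right mmul_idm_left mmul_idm_right X idm_mats XX)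
  have hg: "mmul n h g = idm n" unfolding g_def h_def
    by (simp add: mmul_plus_right mmul_minus_left mmul_scale_left mmul_scale_right mmul_idm_left mmul_idm_right X idm_mats XX)
  have mi: "minv n g = h" using minv_eq[OF gm(2) gh hg] .
  have ut: "upper_tri n g" unfolding upper_tri_def using gm(1) Xu unfolding g_def idm_def by auto
  show "g \<in> Bn_mats n" unfolding Bn_mats_def invertible_mat_def using gm gh hg ut by auto
  fix B :: "'a mat" assume B: "B \<in> mats n"
  have XBm: "mmul n X B \<in> mats n" using X B by (rule mmul_mats)
  show "conj_mat n g B = (\<lambda>p q. B p q + t * mmul n X B p q - t * mmul n B X p q
        - t * t * mmul n (mmul n X B) X p q)"
    unfolding conj_mat_def mi unfolding g_def h_def
    by (rule ext, rule ext) (simp add: mmul_plus_left mmul_minus_right mmul_scale_left mmul_scale_right mmul_idm_left mmul_idm_right B XBm idm_mats algebra_simps)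
qed

lemma set_bel: "set (bel_positions n) = {(a, c). 1 \<le> a \<and> a < c \<and> c \<le> n}"
proof
  show "set (bel_positions n) \<subseteq> {(a, c). 1 \<le> a \<and> a < c \<and> c \<le> n}"
    unfolding bel_positions_def by auto
  show "{(a, c). 1 \<le> a \<and> a < c \<and> c \<le> n} \<subseteq> set (bel_positions n)"
  proof
    fix x assume "x \<in> {(a, c). 1 \<le> a \<and> a < c \<and> c \<le> n}"
    then obtain a c where x: "x = (a, c)" "1 \<le> a" "a < c" "c \<le> n" by auto
    then show "x \<in> set (bel_positions n)" unfolding bel_positions_def
      by (auto intro!: bexI[of _ a])
  qed
qed

lemma sorted_rows:
  assumes "sorted_wrt (>) ls"
  shows "sorted_wrt bel_prec (concat (map (\<lambda>i. map (\<lambda>j. (i, j)) [Suc i..<Suc n]) ls))"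
  using assms
proof (induction ls)
  case Nil then show ?case by simp
next
  case (Cons a ls)
  show ?case
    using Cons by (auto simp: sorted_wrt_append sorted_wrt_map bel_prec_def)
qed

lemma sorted_bel: "sorted_wrt bel_prec (bel_positions n)"
  unfolding bel_positions_def by (rule sorted_rows) (simp add: sorted_wrt_rev)

lemma bel_prec_irrefl: "\<not> bel_prec x x"
  unfolding bel_prec_def by auto
lemma bel_prec_asym: "bel_prec x y \<Longrightarrow> \<not> bel_prec y x"
  unfolding bel_prec_def by auto

lemma take_down:
  assumes "x \<in> set (take m (bel_positions n))" "y \<in> set (bel_positions n)"
    "y = x \<or> bel_prec y x"
  shows "y \<in> set (take m (bel_positions n))"
proof -
  let ?L = "bel_positions n"
  obtain a where a: "a < length (take m ?L)" "take m ?L ! a = x" using assms(1) by (auto simp: in_set_conv_nth)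
  then have a2: "a < m" "a < length ?L" "?L ! a = x" by auto
  obtain b where b: "b < length ?L" "?L ! b = y" using assms(2) by (auto simp: in_set_conv_nth)
  show ?thesis
  proof (cases "b < m")
    case True
    then show ?thesis using b by (auto simp: in_set_conv_nth intro!: exI[of _ b])
  next
    case False
    then have "a < b" using a2 by simp
    then have "bel_prec x y" using sorted_wrt_nth_less[OF sorted_bel \<open>a < b\<close> b(1)] a2 b by simp
    then show ?thesis using assms(3) bel_prec_irrefl bel_prec_asym by blast
  qed
qed

lemma take_char:
  assumes "k < length (bel_positions n)"
  shows "set (take k (bel_positions n)) = {y \<in> set (bel_positions n). bel_prec y (bel_positions n ! k)}"
proof
  let ?L = "bel_positions n"
  show "set (take k ?L) \<subseteq> {y \<in> set ?L. bel_prec y (?L ! k)}"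
  proof
    fix y assume "y \<in> set (take k ?L)"
    then obtain b where b: "b < k" "?L ! b = y" using assms by (auto simp: in_set_conv_nth)
    then have "y \<in> set ?L" using assms by (metis nth_mem order.strict_trans)
    moreover have "bel_prec y (?L ! k)" using sorted_wrt_nth_less[OF sorted_bel b(1) assms] b by simp
    ultimately show "y \<in> {y \<in> set ?L. bel_prec y (?L ! k)}" by simp
  qed
  show "{y \<in> set ?L. bel_prec y (?L ! k)} \<subseteq> set (take k ?L)"
  proof
    fix y assume y: "y \<in> {y \<in> set ?L. bel_prec y (?L ! k)}"
    obtain b where b: "b < length ?L" "?L ! b = y" using y by (auto simp: in_set_conv_nth)
    show "y \<in> set (take k ?L)"
    proof (cases "b < k")
      case True
      then show ?thesis using b by (auto simp: in_set_conv_nth intro!: exI[of _ b])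
    next
      case False
      then have "b = k \<or> k < b" by auto
      then show ?thesis
        using y b sorted_wrt_nth_less[OF sorted_bel _ b(1), of k] bel_prec_irrefl[of y] bel_prec_asym[of y] by auto
    qed
  qed
qed

lemma bel_step_D:
  assumes "bel_step n k A G A' G'"
  shows "A' = A \<or> (\<exists>g\<in>G. A' = conj_mat n g A)"
    "G' = {g \<in> G. \<forall>pos \<in> set (take (Suc k) (bel_positions n)).
                 conj_mat n g A' (fst pos) (snd pos) = A' (fst pos) (snd pos)}"
    "{conj_mat n g A (fst (bel_positions n ! k)) (snd (bel_positions n ! k)) | g. g \<in> G} = UNIV
      \<Longrightarrow> A' (fst (bel_positions n ! k)) (snd (bel_positions n ! k)) = 0"
  using assms unfolding bel_step_def Let_def similar_in_def
  by (auto split: if_splits)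

locale belrun =
  fixes n :: nat and As :: "nat \<Rightarrow> ('a::field) mat" and Gs :: "nat \<Rightarrow> 'a mat set"
  assumes As0: "As 0 \<in> Nn_mats n" and Gs0: "Gs 0 = Bn_mats n"
    and steps: "\<forall>k < length (bel_positions n). bel_step n k (As k) (Gs k) (As (Suc k)) (Gs (Suc k))"
begin

abbreviation "L \<equiv> bel_positions n"
abbreviation "N \<equiv> length (bel_positions n)"

lemma inv: "m \<le> N \<Longrightarrow> As m \<in> Nn_mats n \<and> Gs m \<subseteq> Bn_mats n"
proof (induction m)
  case 0 then show ?case using As0 Gs0 by simp
next
  case (Suc m)
  then have IH: "As m \<in> Nn_mats n" "Gs m \<subseteq> Bn_mats n" and st: "bel_step n m (As m) (Gs m) (As (Suc m)) (Gs (Suc m))"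
    using steps by auto
  have "As (Suc m) \<in> Nn_mats n" using bel_step_D(1)[OF st] IH conj_Nn by (metis subsetD)
  moreover have "Gs (Suc m) \<subseteq> Bn_mats n" using bel_step_D(2)[OF st] IH by blast
  ultimately show ?case by simp
qed

lemma agree1: "m < N \<Longrightarrow> pos \<in> set (take m L) \<Longrightarrow> As (Suc m) (fst pos) (snd pos) = As m (fst pos) (snd pos)"
proof -
  assume m: "m < N" and pos: "pos \<in> set (take m L)"
  have st: "bel_step n m (As m) (Gs m) (As (Suc m)) (Gs (Suc m))" using steps m by auto
  show ?thesis
  proof (cases "As (Suc m) = As m")
    case True then show ?thesis by simp
  next
    case False
    then obtain g where g: "g \<in> Gs m" "As (Suc m) = conj_mat n g (As m)" using bel_step_D(1)[OF st] by auto
    show ?thesis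
    proof (cases m)
      case 0 then show ?thesis using pos by simp
    next
      case (Suc m')
      have st': "bel_step n m' (As m') (Gs m') (As m) (Gs m)" using steps m Suc by auto
      show ?thesis using bel_step_D(2)[OF st'] g pos Suc by auto
    qed
  qed
qed

lemma agree: "k \<le> m \<Longrightarrow> m \<le> N \<Longrightarrow> pos \<in> set (take k L) \<Longrightarrow> As m (fst pos) (snd pos) = As k (fst pos) (snd pos)"
proof (induction m)
  case 0 then show ?case by simp
next
  case (Suc m)
  show ?case
  proof (cases "k = Suc m")
    case True then show ?thesis by simp
  next
    case False
    then have km: "k \<le> m" using Suc by simp
    have "pos \<in> set (take m L)" using Suc.prems(3) set_take_subset_set_take[OF km, of L] by blast
    then have "As (Suc m) (fst pos) (snd pos) = As m (fst pos) (snd pos)" using agree1 Suc by simp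
    then show ?thesis using Suc km by simp
  qed
qed

lemma member:
  assumes kN: "k \<le> N" and g: "g \<in> Bn_mats n"
    and fix_: "\<forall>pos \<in> set (take k L). conj_mat n g (As k) (fst pos) (snd pos) = As k (fst pos) (snd pos)"
  shows "g \<in> Gs k"
proof -
  have "m \<le> k \<Longrightarrow> g \<in> Gs m" for m
  proof (induction m)
    case 0 then show ?case using g Gs0 by simp
  next
    case (Suc m)
    have st: "bel_step n m (As m) (Gs m) (As (Suc m)) (Gs (Suc m))" using steps Suc kN by auto
    have Nk: "As k \<in> Nn_mats n" and Nm: "As (Suc m) \<in> Nn_mats n" using inv Suc kN by auto
    have "conj_mat n g (As (Suc m)) (fst pos) (snd pos) = As (Suc m) (fst pos) (snd pos)"
      if pos: "pos \<in> set (take (Suc m) L)" for pos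
    proof -
      obtain p q where pq: "pos = (p, q)" by force
      have posk: "pos \<in> set (take k L)" using pos set_take_subset_set_take[OF Suc.prems, of L] by blast
      have "conj_mat n g (As (Suc m)) p q = conj_mat n g (As k) p q"
      proof (rule conj_local[OF g])
        fix r s assume r: "r \<in> {1..n}" and s: "s \<in> {1..n}" and pr: "p \<le> r" and sq: "s \<le> q"
        show "As (Suc m) r s = As k r s"
        proof (cases "r < s")
          case False
          then show ?thesis using Nn_props(2)[OF Nk] Nn_props(2)[OF Nm] by simp
        next
          case True
          have "(r, s) \<in> set L" using r s True set_bel by auto
          moreover have "(r, s) = (p, q) \<or> bel_prec (r, s) (p, q)" using pr sq unfolding bel_prec_def by auto
          ultimately have "(r, s) \<in> set (take (Suc m) L)" using take_down pos pq by blast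
          then show ?thesis using agree[of "Suc m" k "(r,s)"] Suc.prems kN by simp
        qed
      qed
      also have "\<dots> = As k p q" using fix_ posk pq by auto
      also have "\<dots> = As (Suc m) p q" using agree[of "Suc m" k pos] Suc.prems kN pos pq by simp
      finally show ?thesis using pq by simp
    qed
    then show ?case using bel_step_D(2)[OF st] Suc by auto
  qed
  then show ?thesis by simp
qed

end

function bs :: "nat \<Rightarrow> ('a::field) mat \<Rightarrow> nat \<Rightarrow> 'a" where
  "bs s U c = (if s \<le> c then (if c = s then 1 else 0) else - (\<Sum>d\<in>{c<..s}. U c d * bs s U d))"
  by auto
termination by (relation "measure (\<lambda>(s, U, c). s - c)") auto

declare bs.simps[simp del]

lemma bs_solve:
  fixes U :: "'a::field mat"
  assumes U: "U \<in> Un_mats n" and s: "1 \<le> s" "s \<le> n" and r: "r \<in> {1..n}"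
  shows "(\<Sum>c\<in>{1..n}. U r c * (if 1 \<le> c then bs s U c else 0)) = (if r = s then 1 else 0)"
proof -
  have Ul: "\<And>a b. b < a \<Longrightarrow> U a b = 0" and Ud: "\<And>a. a \<in> {1..n} \<Longrightarrow> U a a = 1"
    using U unfolding Un_mats_def upper_tri_def by auto
  have bs0: "\<And>c. s < c \<Longrightarrow> bs s U c = 0" by (simp add: bs.simps)
  have "(\<Sum>c\<in>{1..n}. U r c * (if 1 \<le> c then bs s U c else 0)) = (\<Sum>c\<in>{r..s}. U r c * (if 1 \<le> c then bs s U c else 0))"
    by (rule sum.mono_neutral_right) (use r s Ul bs0 in \<open>auto simp: not_le\<close>)
  also have "\<dots> = (\<Sum>c\<in>{r..s}. U r c * bs s U c)" using r by (intro sum.cong) auto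
  also have "\<dots> = (if r = s then 1 else 0)"
  proof (cases "r \<le> s")
    case False then show ?thesis by simp
  next
    case True
    have e: "{r..s} = insert r {r<..s}" using True by auto
    show ?thesis
    proof (cases "r = s")
      case True then show ?thesis using Ud r by (simp add: bs.simps)
    next
      case False
      then have "bs s U r = - (\<Sum>d\<in>{r<..s}. U r d * bs s U d)" using True by (subst bs.simps) simp
      then show ?thesis unfolding e using Ud r False by simp
    qed
  qed
  finally show ?thesis .
qed

lemma QU_entry:
  fixes U :: "'a::field mat"
  assumes I_sub: "I \<subseteq> {1..n}" and \<sigma>_range: "\<sigma> ` I \<subseteq> {1..n}"
  shows "mmul n (subperm I \<sigma>) U p c = (if p \<in> I then U (\<sigma> p) c else 0)"
proof (cases "p \<in> I")
  case True
  then have "\<sigma> p \<in> {1..n}" using \<sigma>_range by auto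
  then show ?thesis unfolding mmul_def using True
    by (subst sum_single[where a="\<sigma> p"]) (auto simp: subperm_def)
next
  case False then show ?thesis unfolding mmul_def subperm_def by simp
qed

inductive reach :: "nat set \<Rightarrow> (nat \<Rightarrow> nat) \<Rightarrow> nat \<Rightarrow> nat \<Rightarrow> bool" for I \<sigma> where
  reach_refl: "reach I \<sigma> a a"
| reach_step: "reach I \<sigma> a b \<Longrightarrow> b \<in> I \<Longrightarrow> reach I \<sigma> a (\<sigma> b)"

lemma reach_mono: "reach I \<sigma> a b \<Longrightarrow> \<forall>i\<in>I. i < \<sigma> i \<Longrightarrow> a = b \<or> a < b"
  by (induction rule: reach.induct) auto

lemma reach_first: "reach I \<sigma> a b \<Longrightarrow> a = b \<or> (a \<in> I \<and> reach I \<sigma> (\<sigma> a) b)"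
  by (induction rule: reach.induct) (auto intro: reach.intros)

lemma reach_last: "reach I \<sigma> a c \<Longrightarrow> c = \<sigma> k \<Longrightarrow> k \<in> I \<Longrightarrow> inj_on \<sigma> I \<Longrightarrow> c = a \<or> reach I \<sigma> a k"
  by (induction rule: reach.cases) (auto dest: inj_onD)

lemma reach_back: "reach I \<sigma> c b \<Longrightarrow> c = \<sigma> k \<Longrightarrow> k \<in> I \<Longrightarrow> reach I \<sigma> k b"
proof (induction arbitrary: k rule: reach.induct)
  case (reach_refl a) then show ?case using reach.reach_refl reach.reach_step by metis
next
  case (reach_step a b) then show ?case using reach.reach_step by metis
qed

lemma same_chain_reach:
  assumes "same_chain I \<sigma> i j" "inj_on \<sigma> I"
  shows "reach I \<sigma> i j \<or> reach I \<sigma> j i"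
proof -
  have "(i, j) \<in> ({(k, \<sigma> k) | k. k \<in> I} \<union> {(\<sigma> k, k) | k. k \<in> I})\<^sup>*"
    using assms unfolding same_chain_def by simp
  then show ?thesis
  proof (induction rule: rtrancl_induct)
    case base then show ?case by (auto intro: reach_refl)
  next
    case (step y z)
    from step.hyps(2) show ?case
    proof
      assume "(y, z) \<in> {(k, \<sigma> k) | k. k \<in> I}"
      then obtain k where k: "y = k" "z = \<sigma> k" "k \<in> I" by auto
      from step.IH show ?thesis
      proof
        assume "reach I \<sigma> i y" then show ?thesis using k reach_step by metis
      next
        assume "reach I \<sigma> y i"
        then have "y = i \<or> reach I \<sigma> (\<sigma> y) i" using reach_first by metis
        then show ?thesis using k reach_refl reach_step by metis
      qed
    next
      assume "(y, z) \<in> {(\<sigma> k, k) | k. k \<in> I}"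
      then obtain k where k: "y = \<sigma> k" "z = k" "k \<in> I" by auto
      from step.IH show ?thesis
      proof
        assume "reach I \<sigma> i y"
        then have "y = i \<or> reach I \<sigma> i k" using reach_last k assms(2) by metis
        then show ?thesis using k reach_refl reach_step by metis
      next
        assume "reach I \<sigma> y i"
        then show ?thesis using reach_back k by metis
      qed
    qed
  qed
qed

lemma chain_case:
  assumes "same_chain I \<sigma> i j" "inj_on \<sigma> I" "\<forall>i\<in>I. i < \<sigma> i" "i \<in> I" "\<sigma> i < j"
  shows "j \<in> \<sigma> ` I \<and> i < the_inv_into I \<sigma> j"
proof -
  have "reach I \<sigma> i j \<or> reach I \<sigma> j i" using same_chain_reach assms by blast
  moreover have "\<not> reach I \<sigma> j i" using reach_mono[of I \<sigma> j i] assms by force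
  ultimately have r: "reach I \<sigma> i j" by simp
  have "j \<noteq> i" using assms by force
  then obtain k where k: "reach I \<sigma> i k" "k \<in> I" "j = \<sigma> k" using r by (metis reach.cases)
  have "k \<noteq> i" using k assms by auto
  then have "i < k" using reach_mono[OF k(1)] assms by auto
  moreover have "the_inv_into I \<sigma> j = k" using k assms(2) by (simp add: the_inv_into_f_f)
  ultimately show ?thesis using k by auto
qed

lemma (in belrun) finish:
  assumes k: "k < N" "L ! k = (i, j)"
    and surj: "\<forall>v. \<exists>g\<in>Bn_mats n. (\<forall>pos\<in>set (take k L). conj_mat n g (As k) (fst pos) (snd pos) = As k (fst pos) (snd pos))
                  \<and> conj_mat n g (As k) i j = v"
  shows "As N i j = 0"
proof -
  have st: "bel_step n k (As k) (Gs k) (As (Suc k)) (Gs (Suc k))" using steps k by auto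
  have "{conj_mat n g (As k) (fst (L ! k)) (snd (L ! k)) | g. g \<in> Gs k} = UNIV"
  proof (intro set_eqI iffI)
    fix v :: 'a
    obtain g where g: "g \<in> Bn_mats n" "\<forall>pos\<in>set (take k L). conj_mat n g (As k) (fst pos) (snd pos) = As k (fst pos) (snd pos)"
      "conj_mat n g (As k) i j = v" using surj by blast
    have "g \<in> Gs k" using member[of k g] k g by simp
    then show "v \<in> {conj_mat n g (As k) (fst (L ! k)) (snd (L ! k)) | g. g \<in> Gs k}" using g k by auto
  qed simp
  then have z: "As (Suc k) i j = 0" using bel_step_D(3)[OF st] k by simp
  have "(i, j) \<in> set (take (Suc k) L)"
    using k by (metis length_take lessI min_less_iff_conj nth_mem nth_take Suc_leI le_neq_implies_less linorder_not_le min.absorb4)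
  then have "As N i j = As (Suc k) i j" using agree[of "Suc k" N "(i,j)"] k by simp
  then show ?thesis using z by simp
qed

lemma mmul_unit_left:
  fixes B :: "'a::field mat"
  assumes "b \<in> {1..n}"
  shows "mmul n (matunit a b) B p q = (if p = a then B b q else 0)"
  unfolding mmul_def using assms
  by (subst sum_single[where a=b]) (auto simp: matunit_def)

lemma mmul_unit_right:
  fixes B :: "'a::field mat"
  assumes "a \<in> {1..n}"
  shows "mmul n B (matunit a b) p q = (if q = b then B p a else 0)"
  unfolding mmul_def using assms
  by (subst sum_single[where a=a]) (auto simp: matunit_def)

lemma case2_surj:
  fixes A B U :: "'a::field mat"
  assumes Aent: "\<And>p c. A p c = (if p \<in> I then U (\<sigma> p) c else 0)" and U: "U \<in> Un_mats n"
    and B: "B \<in> Nn_mats n"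
    and agreeB: "\<And>p q. 1 \<le> p \<Longrightarrow> p < q \<Longrightarrow> q \<le> n \<Longrightarrow> bel_prec (p, q) (i, j) \<Longrightarrow> B p q = A p q"
    and b: "b \<in> I" "\<sigma> b = j" "i < b" "b < j" and i: "1 \<le> i" and jn: "j \<le> n"
  shows "\<forall>v. \<exists>g\<in>Bn_mats n. (\<forall>p q. 1 \<le> p \<longrightarrow> p < q \<longrightarrow> q \<le> n \<longrightarrow> bel_prec (p, q) (i, j) \<longrightarrow> conj_mat n g B p q = B p q)
              \<and> conj_mat n g B i j = v"
proof
  fix v :: 'a
  have Ul: "\<And>a c. c < a \<Longrightarrow> U a c = 0" and Ud: "\<And>a. a \<in> {1..n} \<Longrightarrow> U a a = 1"
    using U unfolding Un_mats_def upper_tri_def by auto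
  have Bm: "B \<in> mats n" and Bl: "\<And>a c. c \<le> a \<Longrightarrow> B a c = 0" using Nn_props[OF B] by auto
  define X :: "'a mat" where "X = matunit i b"
  have bn: "b \<in> {1..n}" "i \<in> {1..n}" using b i jn by auto
  have Xm: "X \<in> mats n" using bn unfolding X_def mats_def matunit_def by auto
  have XX: "mmul n X X = (\<lambda>_ _. 0)" unfolding X_def using bn b
    by (intro ext) (simp only: mmul_unit_left[OF bn(1)], simp add: matunit_def)
  have Xu: "\<forall>a c. c \<le> a \<longrightarrow> X a c = 0" using b unfolding X_def matunit_def by auto
  define t where "t = v - B i j"
  note ec = elem_conj[where X=X and t=t and n=n, OF Xm XX Xu]
  let ?g = "\<lambda>a c. idm n a c + t * X a c"
  have XB: "\<And>p q. mmul n X B p q = (if p = i then B b q else 0)" unfolding X_def using bn by (simp add: mmul_unit_left)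
  have BX: "\<And>p q. mmul n B X p q = (if q = b then B p i else 0)" unfolding X_def using bn by (simp add: mmul_unit_right)
  have XBX: "\<And>p q. mmul n (mmul n X B) X p q = (if q = b then (if p = i then B b i else 0) else 0)"
    unfolding X_def using bn by (simp add: mmul_unit_right mmul_unit_left)
  have cf: "\<And>p q. conj_mat n ?g B p q = B p q + t * (if p = i then B b q else 0) - t * (if q = b then B p i else 0)
        - t * t * (if q = b then (if p = i then B b i else 0) else 0)"
    using ec(2)[OF Bm] XB BX XBX by simp
  have Bbq: "B b q = 0" if "q < j" for q
  proof (cases "q \<le> b")
    case True then show ?thesis using Bl by simp
  next
    case False
    then have "B b q = A b q" using agreeB[of b q] that b i jn unfolding bel_prec_def by auto
    then show ?thesis using Aent b Ul that by simp
  qed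
  have Bbj: "B b j = 1"
    using agreeB[of b j] b i jn Aent Ud[of j] unfolding bel_prec_def by auto
  show "\<exists>g\<in>Bn_mats n. (\<forall>p q. 1 \<le> p \<longrightarrow> p < q \<longrightarrow> q \<le> n \<longrightarrow> bel_prec (p, q) (i, j) \<longrightarrow> conj_mat n g B p q = B p q)
              \<and> conj_mat n g B i j = v"
  proof (intro bexI[of _ ?g] conjI allI impI)
    show "?g \<in> Bn_mats n" using ec(1) .
    show "conj_mat n ?g B i j = v" using cf[of i j] Bbj b unfolding t_def by simp
    fix p q assume pq: "1 \<le> p" "p < q" "q \<le> n" "bel_prec (p, q) (i, j)"
    show "conj_mat n ?g B p q = B p q"
    proof (cases "p = i")
      case True
      then have "q < j" using pq unfolding bel_prec_def by auto
      then show ?thesis using cf[of p q] True Bbq Bl[of b i] Bl[of i i] b by simp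
    next
      case False
      then have "i < p" using pq unfolding bel_prec_def by auto
      then have "B p i = 0" using Bl by simp
      then show ?thesis using cf[of p q] False by simp
    qed
  qed
qed

lemma case1_surj:
  fixes A B U :: "'a::field mat"
  assumes Aent: "\<And>p c. A p c = (if p \<in> I then U (\<sigma> p) c else 0)" and U: "U \<in> Un_mats n"
    and B: "B \<in> Nn_mats n" and AN: "A \<in> Nn_mats n"
    and agreeB: "\<And>p q. 1 \<le> p \<Longrightarrow> p < q \<Longrightarrow> q \<le> n \<Longrightarrow> bel_prec (p, q) (i, j) \<Longrightarrow> B p q = A p q"
    and iI: "i \<in> I" and ij: "\<sigma> i < j" and jI: "j \<notin> I" and i: "1 \<le> i" and jn: "j \<le> n"
    and \<sigma>_inj: "inj_on \<sigma> I" and \<sigma>_range: "\<sigma> ` I \<subseteq> {1..n}" and \<sigma>_incr: "\<forall>i\<in>I. i < \<sigma> i"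
  shows "\<forall>v. \<exists>g\<in>Bn_mats n. (\<forall>p q. 1 \<le> p \<longrightarrow> p < q \<longrightarrow> q \<le> n \<longrightarrow> bel_prec (p, q) (i, j) \<longrightarrow> conj_mat n g B p q = B p q)
              \<and> conj_mat n g B i j = v"
proof
  fix v :: 'a
  define s where "s = \<sigma> i"
  have s: "1 \<le> s" "s \<le> n" "i < s" "s < j" using \<sigma>_range iI \<sigma>_incr ij unfolding s_def by auto
  have Bm: "B \<in> mats n" and Bl: "\<And>a c. c \<le> a \<Longrightarrow> B a c = 0" using Nn_props[OF B] by auto
  have Am: "A \<in> mats n" and Al: "\<And>a c. c \<le> a \<Longrightarrow> A a c = 0" using Nn_props[OF AN] by auto
  define x where "x = (\<lambda>a. if 1 \<le> a then bs s U a else (0::'a))"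
  have x0: "x a = 0" if "s < a \<or> a < 1" for a
    using that unfolding x_def by (auto simp: bs.simps)
  have Ux: "(\<Sum>c\<in>{1..n}. U r c * x c) = (if r = s then 1 else 0)" if "r \<in> {1..n}" for r
    unfolding x_def using bs_solve[OF U s(1,2) that] .
  have Ax: "(\<Sum>c\<in>{1..n}. A p c * x c) = (if p \<in> I \<and> \<sigma> p = s then 1 else 0)" for p
  proof (cases "p \<in> I")
    case True
    then have "\<sigma> p \<in> {1..n}" using \<sigma>_range by auto
    then show ?thesis using Ux[of "\<sigma> p"] True Aent by simp
  next
    case False then show ?thesis using Aent by simp
  qed
  define X :: "'a mat" where "X = (\<lambda>a c. if c = j then x a else 0)"
  have Xm: "X \<in> mats n" unfolding X_def mats_def using x0 s jn i ij by auto
  have XX: "mmul n X X = (\<lambda>_ _. 0)"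
  proof (intro ext)
    fix a c
    have "X a k * X k c = 0" for k
    proof (cases "k = j")
      case True then show ?thesis unfolding X_def using x0[of j] s by simp
    next
      case False then show ?thesis unfolding X_def by simp
    qed
    then show "mmul n X X a c = 0" unfolding mmul_def by (intro sum.neutral) blast
  qed
  have Xu: "\<forall>a c. c \<le> a \<longrightarrow> X a c = 0" unfolding X_def using x0 s by auto
  have Bj0: "B j q = 0" for q
  proof -
    consider "q \<le> j" | "n < q" | "j < q \<and> q \<le> n" by linarith
    then show ?thesis
    proof cases
      case 1 then show ?thesis using Bl by simp
    next
      case 2 then show ?thesis using matsD[OF Bm] by simp
    next
      case 3
      have "i < j" using s by simp
      then have "B j q = A j q" using agreeB[of j q] 3 i unfolding bel_prec_def by simp
      then show ?thesis using Aent jI by simp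
    qed
  qed
  have XB: "mmul n X B = (\<lambda>_ _. 0)"
    unfolding mmul_def X_def by (intro ext sum.neutral ballI) (simp add: Bj0)
  have BX: "mmul n B X p q = (if q = j then (\<Sum>k\<in>{1..n}. B p k * x k) else 0)" for p q
    unfolding mmul_def X_def by simp
  define t where "t = B i j - v"
  note ec = elem_conj[where X=X and t=t and n=n, OF Xm XX Xu]
  let ?g = "\<lambda>a c. idm n a c + t * X a c"
  have cf: "conj_mat n ?g B p q = B p q - t * (if q = j then (\<Sum>k\<in>{1..n}. B p k * x k) else 0)" for p q
  proof -
    have "mmul n (mmul n X B) X = (\<lambda>_ _. 0)" unfolding XB by (simp add: mmul_def)
    then show ?thesis using ec(2)[OF Bm] XB BX by simp
  qed
  have sum_gt: "(\<Sum>k\<in>{1..n}. B p k * x k) = 0" if "i < p" "p \<le> n" for p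
  proof -
    have "(\<Sum>k\<in>{1..n}. B p k * x k) = (\<Sum>k\<in>{1..n}. A p k * x k)"
    proof (intro sum.cong refl)
      fix k assume k: "k \<in> {1..n}"
      show "B p k * x k = A p k * x k"
      proof (cases "k \<le> p")
        case True then show ?thesis using Bl Al by simp
      next
        case False then show ?thesis using agreeB[of p k] that i k unfolding bel_prec_def by auto
      qed
    qed
    also have "\<dots> = 0" using Ax[of p] that iI \<sigma>_inj unfolding s_def by (auto dest: inj_onD)
    finally show ?thesis .
  qed
  have sum_i: "(\<Sum>k\<in>{1..n}. B i k * x k) = 1"
  proof -
    have "(\<Sum>k\<in>{1..n}. B i k * x k) = (\<Sum>k\<in>{1..n}. A i k * x k)"
    proof (intro sum.cong refl)
      fix k assume k: "k \<in> {1..n}"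
      show "B i k * x k = A i k * x k"
      proof (cases "k \<le> i")
        case True then show ?thesis using Bl Al by simp
      next
        case False
        show ?thesis
        proof (cases "s < k")
          case True then show ?thesis using x0 by simp
        next
          case False2: False
          then show ?thesis using agreeB[of i k] False i k s unfolding bel_prec_def by auto
        qed
      qed
    qed
    also have "\<dots> = 1" using Ax[of i] iI unfolding s_def by simp
    finally show ?thesis .
  qed
  show "\<exists>g\<in>Bn_mats n. (\<forall>p q. 1 \<le> p \<longrightarrow> p < q \<longrightarrow> q \<le> n \<longrightarrow> bel_prec (p, q) (i, j) \<longrightarrow> conj_mat n g B p q = B p q)
              \<and> conj_mat n g B i j = v"
  proof (intro bexI[of _ ?g] conjI allI impI)
    show "?g \<in> Bn_mats n" using ec(1) .
    show "conj_mat n ?g B i j = v" using cf[of i j] sum_i unfolding t_def by simp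
    fix p q assume pq: "1 \<le> p" "p < q" "q \<le> n" "bel_prec (p, q) (i, j)"
    show "conj_mat n ?g B p q = B p q"
    proof (cases "q = j")
      case True
      then have "i < p" using pq unfolding bel_prec_def by auto
      then show ?thesis using cf[of p q] sum_gt[of p] pq by simp
    next
      case False
      then show ?thesis using cf[of p q] by simp
    qed
  qed
qed

theorem theorem4p6:
  fixes n :: nat and I :: "nat set" and \<sigma> :: "nat \<Rightarrow> nat" and A :: "'a::field mat"
  assumes I_sub: "I \<subseteq> {1..n}"
    and \<sigma>_inj: "inj_on \<sigma> I"
    and \<sigma>_range: "\<sigma> ` I \<subseteq> {1..n}"
    and \<sigma>_incr: "\<forall>i\<in>I. i < \<sigma> i"
    and A_QU: "A \<in> QUn n (subperm I \<sigma>)"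
    and A_cf: "is_belitskii_cf n A"
    and i_I: "i \<in> I"
    and j_n: "j \<in> {1..n}"
  shows "(\<sigma> i < j \<and> j \<in> {1..n} - I \<longrightarrow> A i j = 0)
       \<and> (j \<notin> {1..n} - \<sigma> ` I \<and> i < the_inv_into I \<sigma> j \<longrightarrow> A i j = 0)
       \<and> (same_chain I \<sigma> i j \<and> j \<noteq> \<sigma> i \<longrightarrow> A i j = 0)"
proof -
  obtain U where U: "U \<in> Un_mats n" and AU: "A = mmul n (subperm I \<sigma>) U"
    using A_QU unfolding QUn_def by auto
  have Aent: "\<And>p c. A p c = (if p \<in> I then U (\<sigma> p) c else 0)"
    unfolding AU using QU_entry[OF I_sub \<sigma>_range] by blast
  have Ul: "\<And>a c. c < a \<Longrightarrow> U a c = 0"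
    using U unfolding Un_mats_def upper_tri_def by auto
  obtain A0 As Gs where A0: "A0 \<in> Nn_mats n" "As 0 = A0" "Gs 0 = Bn_mats n"
    and steps: "\<forall>k < length (bel_positions n). bel_step n k (As k) (Gs k) (As (Suc k)) (Gs (Suc k))"
    and AN: "A = As (length (bel_positions n))"
    using A_cf unfolding is_belitskii_cf_def belitskii_cf_of_def by blast
  interpret belrun n As Gs
    using A0 steps by unfold_locales auto
  have ANn: "A \<in> Nn_mats n" using inv[of N] AN by simp
  have crit: "A i' j' = 0"
    if ij': "1 \<le> i'" "i' < j'" "j' \<le> n"
      and H: "\<And>B. B \<in> Nn_mats n \<Longrightarrow> (\<And>p q. 1 \<le> p \<Longrightarrow> p < q \<Longrightarrow> q \<le> n \<Longrightarrow> bel_prec (p, q) (i', j') \<Longrightarrow> B p q = A p q)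
         \<Longrightarrow> \<forall>v. \<exists>g\<in>Bn_mats n. (\<forall>p q. 1 \<le> p \<longrightarrow> p < q \<longrightarrow> q \<le> n \<longrightarrow> bel_prec (p, q) (i', j') \<longrightarrow> conj_mat n g B p q = B p q)
              \<and> conj_mat n g B i' j' = v"
    for i' j'
  proof -
    have "(i', j') \<in> set L" using ij' set_bel by auto
    then obtain k where k: "k < N" "L ! k = (i', j')" by (auto simp: in_set_conv_nth)
    have tc: "set (take k L) = {y \<in> set L. bel_prec y (i', j')}" using take_char[OF k(1)] k(2) by simp
    have Bk: "As k \<in> Nn_mats n" using inv k by simp
    have agr: "As k p q = A p q" if "1 \<le> p" "p < q" "q \<le> n" "bel_prec (p, q) (i', j')" for p q
    proof -
      have "(p, q) \<in> set (take k L)" using tc that set_bel by auto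
      then show ?thesis using agree[of k N "(p,q)"] k AN by simp
    qed
    have S: "\<forall>v. \<exists>g\<in>Bn_mats n. (\<forall>p q. 1 \<le> p \<longrightarrow> p < q \<longrightarrow> q \<le> n \<longrightarrow> bel_prec (p, q) (i', j') \<longrightarrow> conj_mat n g (As k) p q = As k p q)
              \<and> conj_mat n g (As k) i' j' = v"
      using H[OF Bk agr] by blast
    have S2: "\<forall>v. \<exists>g\<in>Bn_mats n. (\<forall>pos\<in>set (take k L). conj_mat n g (As k) (fst pos) (snd pos) = As k (fst pos) (snd pos))
                  \<and> conj_mat n g (As k) i' j' = v"
    proof
      fix v
      obtain g where g: "g \<in> Bn_mats n" "\<forall>p q. 1 \<le> p \<longrightarrow> p < q \<longrightarrow> q \<le> n \<longrightarrow> bel_prec (p, q) (i', j') \<longrightarrow> conj_mat n g (As k) p q = As k p q"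
        "conj_mat n g (As k) i' j' = v" using S by blast
      have "\<forall>pos\<in>set (take k L). conj_mat n g (As k) (fst pos) (snd pos) = As k (fst pos) (snd pos)"
        using g(2) unfolding tc set_bel by auto
      then show "\<exists>g\<in>Bn_mats n. (\<forall>pos\<in>set (take k L). conj_mat n g (As k) (fst pos) (snd pos) = As k (fst pos) (snd pos))
                  \<and> conj_mat n g (As k) i' j' = v" using g by blast
    qed
    have "As N i' j' = 0" using finish[OF k S2] .
    then show ?thesis using AN by simp
  qed
  have i1: "1 \<le> i" using I_sub i_I by auto
  have part1: "A i j = 0" if "\<sigma> i < j" "j \<in> {1..n} - I"
  proof (rule crit)
    show "1 \<le> i" "i < j" "j \<le> n" using i1 that \<sigma>_incr i_I by auto
    fix B :: "'a mat" assume "B \<in> Nn_mats n"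
      and "\<And>p q. 1 \<le> p \<Longrightarrow> p < q \<Longrightarrow> q \<le> n \<Longrightarrow> bel_prec (p, q) (i, j) \<Longrightarrow> B p q = A p q"
    then show "\<forall>v. \<exists>g\<in>Bn_mats n. (\<forall>p q. 1 \<le> p \<longrightarrow> p < q \<longrightarrow> q \<le> n \<longrightarrow> bel_prec (p, q) (i, j) \<longrightarrow> conj_mat n g B p q = B p q)
              \<and> conj_mat n g B i j = v"
      using case1_surj[OF Aent U _ ANn _ i_I _ _ i1 _ \<sigma>_inj \<sigma>_range \<sigma>_incr] that by auto
  qed
  have part2: "A i j = 0" if "j \<notin> {1..n} - \<sigma> ` I" "i < the_inv_into I \<sigma> j"
  proof -
    define b where "b = the_inv_into I \<sigma> j"
    have jI: "j \<in> \<sigma> ` I" using that j_n by auto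
    have b: "b \<in> I" "\<sigma> b = j" unfolding b_def
      using the_inv_into_into[OF \<sigma>_inj jI subset_refl] f_the_inv_into_f[OF \<sigma>_inj jI] by auto
    have ib: "i < b" "b < j" using that b \<sigma>_incr unfolding b_def by auto
    show ?thesis
    proof (rule crit)
      show "1 \<le> i" "i < j" "j \<le> n" using i1 ib j_n by auto
      fix B :: "'a mat" assume "B \<in> Nn_mats n"
        and "\<And>p q. 1 \<le> p \<Longrightarrow> p < q \<Longrightarrow> q \<le> n \<Longrightarrow> bel_prec (p, q) (i, j) \<Longrightarrow> B p q = A p q"
      then show "\<forall>v. \<exists>g\<in>Bn_mats n. (\<forall>p q. 1 \<le> p \<longrightarrow> p < q \<longrightarrow> q \<le> n \<longrightarrow> bel_prec (p, q) (i, j) \<longrightarrow> conj_mat n g B p q = B p q)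
              \<and> conj_mat n g B i j = v"
        using case2_surj[OF Aent U _ _ b ib i1] j_n by auto
    qed
  qed
  have part3: "A i j = 0" if "same_chain I \<sigma> i j" "j \<noteq> \<sigma> i"
  proof (cases "j < \<sigma> i")
    case True then show ?thesis using Aent i_I Ul by simp
  next
    case False
    then have "\<sigma> i < j" using that by simp
    then have "j \<in> \<sigma> ` I \<and> i < the_inv_into I \<sigma> j" using chain_case that \<sigma>_inj \<sigma>_incr i_I by blast
    then show ?thesis using part2 by blast
  qed
  show ?thesis using part1 part2 part3 by blast
qed

end
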